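(* Let $(M,d)$ be a pointed metric space. The space $\mathrm{Lip}_0(M)$ has the $w^*$-LD2P if and only if $M$ has the 2-Lip-LTP.
   Context: $M$ has base point $0$; $\mathrm{Lip}_0(M)$ is the real Banach space of Lipschitz $f\colon M\to\mathbb R$ with $f(0)=0$, normed by the best Lipschitz constant, with unit ball $B_{\mathrm{Lip}_0(M)}$; it is the dual of the Lipschitz-free space $\mathcal F(M)$ (norm-closed span of the point evaluations $\delta_x$ in $\mathrm{Lip}_0(M)^*$). $\mathrm{Lip}_0(M)$ has the $w^*$-LD2P if every $w^*$-slice $\{f\in B_{\mathrm{Lip}_0(M)}: \mu(f)>1-\alpha\}$, $\mu\in\mathcal F(M)$, $\|\mu\|=1$, $\alpha>0$, has diameter $2$. $\widetilde M=\{(x,y)\in M\times M:x\ne y\}$, $f(m_{x,y})=(f(x)-f(y))/d(x,y)$, $\pi(A)=\{x\in M:\exists y,\ (x,y)\in A\text{ or }(y,x)\in A\}$. $A\subseteq\widetilde M$ is cyclically monotonic if for every finite sequence $(x_1,y_1),\dots,(x_n,y_n)\in A$, with $y_{n+1}=y_1$, $\sum_i d(x_i,y_{i+1})\ge\sum_i d(x_i,y_i)$. $M$ has the 2-Lip-LTP if for every finite cyclically monotonic $A\subseteq\widetilde M$ and every $\varepsilon>0$ there exist $f,g\in B_{\mathrm{Lip}_0(M)}$ and $u,v\in M$ with $u\ne v$ such that $f(m_{x,y})\ge1-\varepsilon$ and $g(m_{x,y})\ge1-\varepsilon$ for all $(x,y)\in A$, and $\max\{f(x)-f(y),g(y)-g(x)\}+(1-\varepsilon)d(u,v)\le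 d(x,u)+d(y,v)$ for all $x,y\in\pi(A)$. *)

theory Defs
  imports "HOL-Analysis.Analysis"
begin

definition Lip0 :: "'a::metric_space \<Rightarrow> ('a \<Rightarrow> real) set" where
  "Lip0 p = {f. (\<exists>C. C-lipschitz_on UNIV f) \<and> f p = 0}"

definition lipnorm :: "('a::metric_space \<Rightarrow> real) \<Rightarrow> real" where
  "lipnorm f = Inf {C. C-lipschitz_on UNIV f}"

definition LipBall :: "'a::metric_space \<Rightarrow> ('a \<Rightarrow> real) set" where
  "LipBall p = {f \<in> Lip0 p. lipnorm f \<le> 1}"

text \<open>Elements of the Lipschitz-free space F(M), viewed as functionals on Lip_0(M):
  norm limits (in the dual norm, i.e. uniformly on the unit ball) of finite linear
  combinations of point evaluations.\<close>
definition free_elem :: "'a::metric_space \<Rightarrow> (('a \<Rightarrow> real) \<Rightarrow> real) \<Rightarrow> bool" where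
  "free_elem p \<mu> \<longleftrightarrow> (\<forall>\<epsilon>>0. \<exists>S (a::'a \<Rightarrow> real). finite S \<and>
      (\<forall>f\<in>LipBall p. \<bar>\<mu> f - (\<Sum>x\<in>S. a x * f x)\<bar> \<le> \<epsilon>))"

definition dual_norm :: "'a::metric_space \<Rightarrow> (('a \<Rightarrow> real) \<Rightarrow> real) \<Rightarrow> real" where
  "dual_norm p \<mu> = (SUP f\<in>LipBall p. \<bar>\<mu> f\<bar>)"

definition wstar_slice :: "'a::metric_space \<Rightarrow> (('a \<Rightarrow> real) \<Rightarrow> real) \<Rightarrow> real \<Rightarrow> ('a \<Rightarrow> real) set" where
  "wstar_slice p \<mu> \<alpha> = {f \<in> LipBall p. \<mu> f > 1 - \<alpha>}"

definition lip_diam :: "('a::metric_space \<Rightarrow> real) set \<Rightarrow> real" where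
  "lip_diam S = (SUP fg\<in>S \<times> S. lipnorm (\<lambda>x. fst fg x - snd fg x))"

definition wstar_LD2P :: "'a::metric_space \<Rightarrow> bool" where
  "wstar_LD2P p \<longleftrightarrow> (\<forall>\<mu> \<alpha>. free_elem p \<mu> \<and> dual_norm p \<mu> = 1 \<and> \<alpha> > 0 \<longrightarrow>
      lip_diam (wstar_slice p \<mu> \<alpha>) = 2)"

definition mol :: "('a::metric_space \<Rightarrow> real) \<Rightarrow> 'a \<Rightarrow> 'a \<Rightarrow> real" where
  "mol f x y = (f x - f y) / dist x y"

definition piA :: "('a \<times> 'a) set \<Rightarrow> 'a set" where
  "piA A = fst ` A \<union> snd ` A"

definition cyc_monotonic :: "('a::metric_space \<times> 'a) set \<Rightarrow> bool" where
  "cyc_monotonic A \<longleftrightarrow> (\<forall>ps. set ps \<subseteq> A \<longrightarrow>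
      (\<Sum>i<length ps. dist (fst (ps ! i)) (snd (ps ! ((i + 1) mod length ps))))
        \<ge> (\<Sum>i<length ps. dist (fst (ps ! i)) (snd (ps ! i))))"

definition two_Lip_LTP :: "'a::metric_space \<Rightarrow> bool" where
  "two_Lip_LTP p \<longleftrightarrow> (\<forall>A \<epsilon>. finite A \<and> A \<subseteq> {(x, y). x \<noteq> y} \<and> cyc_monotonic A \<and> \<epsilon> > 0 \<longrightarrow>
     (\<exists>f\<in>LipBall p. \<exists>g\<in>LipBall p. \<exists>u v. u \<noteq> v \<and>
        (\<forall>(x, y)\<in>A. mol f x y \<ge> 1 - \<epsilon> \<and> mol g x y \<ge> 1 - \<epsilon>) \<and>
        (\<forall>x\<in>piA A. \<forall>y\<in>piA A.
           max (f x - f y) (g y - g x) + (1 - \<epsilon>) * dist u v \<le> dist x u + dist y v)))"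

end

theory Submission
  imports Defs
begin


lemma lip1_intro:
  assumes "\<And>x y. g x - g y \<le> dist x y"
  shows "1-lipschitz_on UNIV g"
  unfolding lipschitz_on_def
proof (intro conjI ballI)
  fix x y
  have "g x - g y \<le> dist x y" "g y - g x \<le> dist x y"
    using assms[of x y] assms[of y x] by (auto simp: dist_commute)
  then show "dist (g x) (g y) \<le> 1 * dist x y" by (simp add: dist_real_def)
qed simp

lemma lip1_D:
  assumes "1-lipschitz_on UNIV g"
  shows "g x - g y \<le> dist x y"
proof -
  have "\<bar>g x - g y\<bar> \<le> 1 * dist x y" using assms unfolding lipschitz_on_def dist_real_def by blast
  then show ?thesis by simp
qed

lemma lipnorm_le:
  assumes "C-lipschitz_on UNIV f"
  shows "lipnorm f \<le> C"
  unfolding lipnorm_def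
  by (rule cInf_lower) (use assms in \<open>auto simp: lipschitz_on_def intro!: bdd_belowI[of _ 0]\<close>)

lemma lipnorm_bound:
  assumes "C-lipschitz_on UNIV f"
  shows "dist (f x) (f y) \<le> lipnorm f * dist x y"
proof (cases "x = y")
  case True then show ?thesis by simp
next
  case False
  then have dp: "dist x y > 0" by simp
  have "dist (f x) (f y) / dist x y \<le> lipnorm f"
    unfolding lipnorm_def
  proof (rule cInf_greatest)
    show "{C. C-lipschitz_on UNIV f} \<noteq> {}" using assms by blast
    fix C assume "C \<in> {C. C-lipschitz_on UNIV f}"
    then have "dist (f x) (f y) \<le> C * dist x y" by (auto simp: lipschitz_on_def)
    then show "dist (f x) (f y) / dist x y \<le> C" using dp by (simp add: divide_le_eq)
  qed
  then show ?thesis using dp by (simp add: divide_le_eq)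
qed

lemma LipBall_lip1:
  assumes "f \<in> LipBall p"
  shows "1-lipschitz_on UNIV f" and "f p = 0"
proof -
  from assms obtain C where C: "C-lipschitz_on UNIV f" and n: "lipnorm f \<le> 1" and "f p = 0"
    by (auto simp: LipBall_def Lip0_def)
  then show "f p = 0" by simp
  show "1-lipschitz_on UNIV f"
    unfolding lipschitz_on_def
  proof (intro conjI ballI)
    fix x y
    have "dist (f x) (f y) \<le> lipnorm f * dist x y" by (rule lipnorm_bound[OF C])
    also have "\<dots> \<le> 1 * dist x y" using n by (intro mult_right_mono) auto
    finally show "dist (f x) (f y) \<le> 1 * dist x y" .
  qed simp
qed

lemma LipBall_intro:
  assumes "1-lipschitz_on UNIV f" "f p = 0"
  shows "f \<in> LipBall p"
  using assms lipnorm_le[OF assms(1)] by (auto simp: LipBall_def Lip0_def)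

lemma LipBall_D:
  assumes "f \<in> LipBall p"
  shows "f x - f y \<le> dist x y"
  using lip1_D[OF LipBall_lip1(1)[OF assms]] .

lemma mol_le1:
  assumes "f \<in> LipBall p"
  shows "mol f x y \<le> 1"
proof (cases "x = y")
  case True then show ?thesis by (simp add: mol_def)
next
  case False
  then show ?thesis using LipBall_D[OF assms, of x y]
    by (simp add: mol_def divide_le_eq)
qed

lemma lipnorm_lower:
  assumes "C-lipschitz_on UNIV f" "u \<noteq> v"
  shows "(f u - f v) / dist u v \<le> lipnorm f"
proof -
  have "f u - f v \<le> dist (f u) (f v)" by (simp add: dist_real_def)
  also have "\<dots> \<le> lipnorm f * dist u v" by (rule lipnorm_bound[OF assms(1)])
  finally show ?thesis using assms(2) by (simp add: divide_le_eq)
qed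

lemma diff_lip2:
  assumes "f \<in> LipBall p" "g \<in> LipBall p"
  shows "2-lipschitz_on UNIV (\<lambda>x. f x - g x)"
  unfolding lipschitz_on_def
proof (intro conjI ballI)
  fix x y
  have "f x - f y \<le> dist x y" "f y - f x \<le> dist x y" "g x - g y \<le> dist x y" "g y - g x \<le> dist x y"
    using LipBall_D[OF assms(1)] LipBall_D[OF assms(2)] by (metis dist_commute)+
  then show "dist (f x - g x) (f y - g y) \<le> 2 * dist x y" by (simp add: dist_real_def abs_le_iff)
qed simp

lemma zero_LipBall: "(\<lambda>x. 0) \<in> LipBall p"
  by (rule LipBall_intro) (auto intro: lip1_intro)

lemma neg_LipBall: "f \<in> LipBall p \<Longrightarrow> (\<lambda>x. - f x) \<in> LipBall p"
  apply (rule LipBall_intro)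
   apply (rule lip1_intro)
  using LipBall_D[of f p] LipBall_lip1(2)[of f p] by (auto, metis dist_commute)



fun chain_sum :: "'a::metric_space \<Rightarrow> 'a \<Rightarrow> ('a \<times> 'a) list \<Rightarrow> real" where
  "chain_sum b z [] = dist z b"
| "chain_sum b z (q # ps) = dist z (snd q) + chain_sum b (fst q) ps"

lemma chain_sum_nth:
  "(\<Sum>i<Suc (length ps). dist (fst (((z,w)#ps)!i)) (snd ((ps@[(c,b)])!i))) = chain_sum b z ps"
proof (induction ps arbitrary: z w)
  case Nil
  then show ?case by simp
next
  case (Cons q ps)
  have "(\<Sum>i<Suc (length (q#ps)). dist (fst (((z,w)#q#ps)!i)) (snd (((q#ps)@[(c,b)])!i)))
     = dist z (snd q) + (\<Sum>i<Suc (length ps). dist (fst (((fst q, snd q)#ps)!i)) (snd ((ps@[(c,b)])!i)))"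
    by (subst sum.lessThan_Suc_shift) simp
  also have "\<dots> = dist z (snd q) + chain_sum b (fst q) ps" by (subst Cons.IH) (rule refl)
  finally show ?case by simp
qed

definition Wch :: "'a::metric_space \<Rightarrow> 'a \<Rightarrow> ('a \<times> 'a) list \<Rightarrow> real" where
  "Wch b z ps = chain_sum b z ps - (\<Sum>q\<leftarrow>ps. dist (fst q) (snd q))"

lemma Wch_lip: "Wch b z ps - Wch b z' ps \<le> dist z z'"
proof (cases ps)
  case Nil
  then show ?thesis by (simp add: Wch_def) (metis dist_commute dist_triangle2 diff_le_eq add.commute)
next
  case (Cons q qs)
  then show ?thesis by (simp add: Wch_def) (metis dist_commute dist_triangle2 diff_le_eq add.commute)
qed

lemma cyc_chain:
  assumes "cyc_monotonic A" "(x0,y0) \<in> A" "set ps \<subseteq> A"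
  shows "Wch y0 x0 ps \<ge> dist x0 y0"
proof -
  define qs where "qs = (x0,y0)#ps"
  have "set qs \<subseteq> A" using assms by (auto simp: qs_def)
  then have cm: "(\<Sum>i<length qs. dist (fst (qs ! i)) (snd (qs ! ((i + 1) mod length qs))))
        \<ge> (\<Sum>i<length qs. dist (fst (qs ! i)) (snd (qs ! i)))"
    using assms(1) unfolding cyc_monotonic_def by blast
  have "(\<Sum>i<length qs. dist (fst (qs ! i)) (snd (qs ! ((i + 1) mod length qs))))
      = (\<Sum>i<Suc (length ps). dist (fst (((x0,y0)#ps)!i)) (snd ((ps@[(x0,y0)])!i)))"
  proof (rule sum.cong)
    show "{..<length qs} = {..<Suc (length ps)}" by (simp add: qs_def)
  next
    fix i assume "i \<in> {..<Suc (length ps)}"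
    then have "i < length qs" by (simp add: qs_def)
    then have "qs ! ((i + 1) mod length qs) = rotate1 qs ! i" by (simp add: nth_rotate1)
    then show "dist (fst (qs ! i)) (snd (qs ! ((i + 1) mod length qs))) =
         dist (fst (((x0,y0)#ps)!i)) (snd ((ps@[(x0,y0)])!i))" by (simp add: qs_def)
  qed
  also have "\<dots> = chain_sum y0 x0 ps" by (rule chain_sum_nth)
  finally have l: "(\<Sum>i<length qs. dist (fst (qs ! i)) (snd (qs ! ((i + 1) mod length qs)))) = chain_sum y0 x0 ps" .
  have "(\<Sum>i<length qs. dist (fst (qs ! i)) (snd (qs ! i)))
      = dist x0 y0 + (\<Sum>i<length ps. dist (fst (ps ! i)) (snd (ps ! i)))"
    by (simp only: qs_def length_Cons sum.lessThan_Suc_shift nth_Cons_0 nth_Cons_Suc fst_conv snd_conv)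
  also have "(\<Sum>i<length ps. dist (fst (ps ! i)) (snd (ps ! i))) = (\<Sum>q\<leftarrow>ps. dist (fst q) (snd q))"
    by (simp add: sum_list_sum_nth atLeast0LessThan)
  finally show ?thesis using cm l by (simp add: Wch_def)
qed

lemma rockafellar:
  assumes "cyc_monotonic A" "A \<noteq> {}"
  shows "\<exists>F. 1-lipschitz_on UNIV F \<and> (\<forall>(x,y)\<in>A. F x - F y = dist x y)"
proof -
  obtain x0 y0 where a0: "(x0,y0) \<in> A" using assms(2) by auto
  define F where "F z = Inf ((\<lambda>ps. Wch y0 z ps) ` {ps. set ps \<subseteq> A})" for z
  have "[] \<in> {ps. set ps \<subseteq> A}" by simp
  then have ne: "{ps. set ps \<subseteq> A} \<noteq> {}" by blast
  have bdd: "bdd_below ((\<lambda>ps. Wch y0 z ps) ` {ps. set ps \<subseteq> A})" for z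
  proof (rule bdd_belowI2)
    fix ps assume "ps \<in> {ps. set ps \<subseteq> A}"
    then have "Wch y0 x0 ps \<ge> dist x0 y0" using cyc_chain[OF assms(1) a0] by auto
    moreover have "Wch y0 x0 ps - Wch y0 z ps \<le> dist x0 z" by (rule Wch_lip)
    ultimately show "- dist x0 z \<le> Wch y0 z ps" by (smt (verit) zero_le_dist)
  qed
  have Fle: "F z \<le> Wch y0 z ps" if "set ps \<subseteq> A" for z ps
    unfolding F_def by (rule cInf_lower) (use that bdd in auto)
  have lip: "F z - F z' \<le> dist z z'" for z z'
  proof -
    have "F z - dist z z' \<le> F z'"
      unfolding F_def[of z']
    proof (rule cInf_greatest)
      show "(\<lambda>ps. Wch y0 z' ps) ` {ps. set ps \<subseteq> A} \<noteq> {}" using ne by auto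
      fix r assume "r \<in> (\<lambda>ps. Wch y0 z' ps) ` {ps. set ps \<subseteq> A}"
      then obtain ps where ps: "set ps \<subseteq> A" "r = Wch y0 z' ps" by auto
      show "F z - dist z z' \<le> r" using Fle[OF ps(1), of z] Wch_lip[of y0 z ps z'] ps(2) by linarith
    qed
    then show ?thesis by linarith
  qed
  have tight: "F x - F y \<ge> dist x y" if xy: "(x,y) \<in> A" for x y
  proof -
    have "F y + dist x y \<le> F x"
      unfolding F_def[of x]
    proof (rule cInf_greatest)
      show "(\<lambda>ps. Wch y0 x ps) ` {ps. set ps \<subseteq> A} \<noteq> {}" using ne by auto
      fix r assume "r \<in> (\<lambda>ps. Wch y0 x ps) ` {ps. set ps \<subseteq> A}"
      then obtain ps where ps: "set ps \<subseteq> A" "r = Wch y0 x ps" by auto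
      have "set ((x,y)#ps) \<subseteq> A" using ps xy by auto
      then have "F y \<le> Wch y0 y ((x,y)#ps)" by (rule Fle)
      also have "\<dots> = Wch y0 x ps - dist x y" by (simp add: Wch_def)
      finally show "F y + dist x y \<le> r" using ps(2) by linarith
    qed
    then show ?thesis by linarith
  qed
  show ?thesis
    by (rule exI[of _ F]) (use lip tight in \<open>auto intro!: lip1_intro antisym\<close>)
qed



lemma abs_mol_le1:
  assumes "f \<in> LipBall p"
  shows "\<bar>mol f x y\<bar> \<le> 1"
proof -
  have "f x - f y \<le> dist x y" "f y - f x \<le> dist x y"
    using LipBall_D[OF assms] by (metis dist_commute)+
  then show ?thesis
    by (cases "x = y") (auto simp: mol_def abs_le_iff divide_le_eq le_divide_eq)
qed

lemma sum_delta_mult: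
  assumes "finite P" "x \<in> P"
  shows "(\<Sum>z\<in>P. (if x = z then (c::real) else 0) * g z) = c * g x"
proof -
  have "(\<Sum>z\<in>P. (if x = z then c else 0) * g z) = (\<Sum>z\<in>P. if x = z then c * g z else 0)"
    by (rule sum.cong) auto
  also have "\<dots> = c * g x" using assms by (simp add: sum.delta)
  finally show ?thesis .
qed

lemma free_elem_molsum:
  assumes "finite A"
  shows "free_elem p (\<lambda>f. (\<Sum>q\<in>A. mol f (fst q) (snd q)) / n)"
  unfolding free_elem_def
proof (intro allI impI)
  fix e :: real assume "e > 0"
  define P where "P = piA A"
  have fP: "finite P" using assms by (simp add: P_def piA_def)
  define a where "a z = (\<Sum>q\<in>A. ((if fst q = z then 1 else 0) - (if snd q = z then 1 else 0))
        / dist (fst q) (snd q)) / n" for z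
  have eq: "(\<Sum>q\<in>A. mol f (fst q) (snd q)) / n = (\<Sum>z\<in>P. a z * f z)" for f
  proof -
    have "(\<Sum>z\<in>P. a z * f z) = (\<Sum>z\<in>P. \<Sum>q\<in>A. ((if fst q = z then 1 else 0) - (if snd q = z then 1 else 0))
        / dist (fst q) (snd q) * f z) / n"
      by (simp add: a_def sum_divide_distrib sum_distrib_right)
    also have "\<dots> = (\<Sum>q\<in>A. \<Sum>z\<in>P. ((if fst q = z then 1 else 0) * f z - (if snd q = z then 1 else 0) * f z)
        / dist (fst q) (snd q)) / n"
      by (subst sum.swap) (simp add: algebra_simps diff_divide_distrib)
    also have "\<dots> = (\<Sum>q\<in>A. (f (fst q) - f (snd q)) / dist (fst q) (snd q)) / n"
    proof -
      have "(\<Sum>z\<in>P. ((if fst q = z then 1 else 0) * f z - (if snd q = z then 1 else 0) * f z)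
        / dist (fst q) (snd q)) = (f (fst q) - f (snd q)) / dist (fst q) (snd q)" if "q \<in> A" for q
      proof -
        have "fst q \<in> P" "snd q \<in> P" using that by (auto simp: P_def piA_def)
        then show ?thesis
          by (simp add: sum_divide_distrib[symmetric] sum_subtractf sum_delta_mult[OF fP])
      qed
      then show ?thesis by simp
    qed
    finally show ?thesis by (simp add: mol_def)
  qed
  show "\<exists>S a. finite S \<and> (\<forall>f\<in>LipBall p. \<bar>(\<Sum>q\<in>A. mol f (fst q) (snd q)) / n - (\<Sum>x\<in>S. a x * f x)\<bar> \<le> e)"
    by (rule exI[of _ P], rule exI[of _ a]) (use fP eq \<open>e > 0\<close> in auto)
qed



lemma LD2P_imp_LTP:
  fixes p :: "'a::metric_space"
  assumes two: "\<exists>x y :: 'a. x \<noteq> y" and LD: "wstar_LD2P p"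
  shows "two_Lip_LTP p"
  unfolding two_Lip_LTP_def
proof (intro allI impI, elim conjE)
  fix A :: "('a \<times> 'a) set" and \<epsilon> :: real
  assume fA: "finite A" and Aneq: "A \<subseteq> {(x, y). x \<noteq> y}" and cm: "cyc_monotonic A" and ep: "\<epsilon> > 0"
  show "\<exists>f\<in>LipBall p. \<exists>g\<in>LipBall p. \<exists>u v. u \<noteq> v \<and>
        (\<forall>(x, y)\<in>A. mol f x y \<ge> 1 - \<epsilon> \<and> mol g x y \<ge> 1 - \<epsilon>) \<and>
        (\<forall>x\<in>piA A. \<forall>y\<in>piA A.
           max (f x - f y) (g y - g x) + (1 - \<epsilon>) * dist u v \<le> dist x u + dist y v)"
  proof (cases "A = {}")
    case True
    obtain u v :: 'a where "u \<noteq> v" using two by blast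
    show ?thesis
      apply (rule bexI[where x="\<lambda>_. 0"])
       apply (rule bexI[where x="\<lambda>_. 0"])
        apply (rule exI[where x=u])
        apply (rule exI[where x=v])
      using True \<open>u \<noteq> v\<close> zero_LipBall[of p] by (simp_all add: piA_def)
  next
    case False
    define n where "n = real (card A)"
    have npos: "n > 0" using False fA by (simp add: n_def card_gt_0_iff)
    obtain F0 where F0: "1-lipschitz_on UNIV F0" "\<forall>(x,y)\<in>A. F0 x - F0 y = dist x y"
      using rockafellar[OF cm False] by blast
    define F where "F z = F0 z - F0 p" for z
    have FB: "F \<in> LipBall p"
      by (rule LipBall_intro, rule lip1_intro) (use lip1_D[OF F0(1)] in \<open>auto simp: F_def\<close>)
    have Fmol: "mol F x y = 1" if "(x,y) \<in> A" for x y
    proof -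
      have "x \<noteq> y" using that Aneq by auto
      then show ?thesis using F0(2) that by (auto simp: mol_def F_def)
    qed
    define \<mu> where "\<mu> f = (\<Sum>q\<in>A. mol f (fst q) (snd q)) / n" for f
    have fe: "free_elem p \<mu>" unfolding \<mu>_def by (rule free_elem_molsum[OF fA])
    have muF: "\<mu> F = 1"
    proof -
      have "(\<Sum>q\<in>A. mol F (fst q) (snd q)) = (\<Sum>q\<in>A. 1)"
        by (rule sum.cong) (auto intro: Fmol)
      then show ?thesis using npos by (simp add: \<mu>_def n_def)
    qed
    have mule: "\<bar>\<mu> f\<bar> \<le> 1" if "f \<in> LipBall p" for f
    proof -
      have "\<bar>\<Sum>q\<in>A. mol f (fst q) (snd q)\<bar> \<le> (\<Sum>q\<in>A. \<bar>mol f (fst q) (snd q)\<bar>)" by (rule sum_abs)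
      also have "\<dots> \<le> (\<Sum>q\<in>A. 1)" by (rule sum_mono) (rule abs_mol_le1[OF that])
      also have "(\<Sum>q\<in>A. (1::real)) = n" by (simp add: n_def)
      finally have S: "\<bar>\<Sum>q\<in>A. mol f (fst q) (snd q)\<bar> \<le> n" .
      have "\<bar>\<mu> f\<bar> = \<bar>\<Sum>q\<in>A. mol f (fst q) (snd q)\<bar> / n"
        using npos by (simp add: \<mu>_def abs_divide)
      also have "\<dots> \<le> 1" using S npos by (simp add: divide_le_eq)
      finally show ?thesis .
    qed
    have dn: "dual_norm p \<mu> = 1"
      unfolding dual_norm_def
    proof (rule cSup_eq_maximum)
      show "1 \<in> (\<lambda>f. \<bar>\<mu> f\<bar>) ` LipBall p" by (rule image_eqI[OF _ FB]) (simp add: muF)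
    next
      fix r assume "r \<in> (\<lambda>f. \<bar>\<mu> f\<bar>) ` LipBall p"
      then obtain f where "f \<in> LipBall p" "r = \<bar>\<mu> f\<bar>" by (rule imageE)
      then show "r \<le> 1" using mule by simp
    qed
    define \<alpha> where "\<alpha> = \<epsilon> / n"
    have al: "\<alpha> > 0" using ep npos by (simp add: \<alpha>_def)
    have diam: "lip_diam (wstar_slice p \<mu> \<alpha>) = 2"
      using LD[unfolded wstar_LD2P_def, THEN spec[of _ \<mu>], THEN spec[of _ \<alpha>]] fe dn al by simp
    define \<eta> where "\<eta> = min \<epsilon> 1"
    have eta: "\<eta> > 0" "\<eta> \<le> \<epsilon>" "\<eta> \<le> 1" using ep by (auto simp: \<eta>_def)
    have Fs: "F \<in> wstar_slice p \<mu> \<alpha>" using FB muF al by (simp add: wstar_slice_def)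
    have sliceB: "wstar_slice p \<mu> \<alpha> \<subseteq> LipBall p" by (auto simp: wstar_slice_def)
    have bdd: "bdd_above ((\<lambda>fg. lipnorm (\<lambda>x. fst fg x - snd fg x)) ` (wstar_slice p \<mu> \<alpha> \<times> wstar_slice p \<mu> \<alpha>))"
    proof (rule bdd_aboveI2)
      fix fg assume "fg \<in> wstar_slice p \<mu> \<alpha> \<times> wstar_slice p \<mu> \<alpha>"
      then have "fst fg \<in> LipBall p" "snd fg \<in> LipBall p" using sliceB by auto
      then show "lipnorm (\<lambda>x. fst fg x - snd fg x) \<le> 2" by (intro lipnorm_le diff_lip2)
    qed
    have "2 - \<eta> < lip_diam (wstar_slice p \<mu> \<alpha>)" using diam eta by simp
    moreover have ne: "wstar_slice p \<mu> \<alpha> \<times> wstar_slice p \<mu> \<alpha> \<noteq> {}" using Fs by blast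
    ultimately have "2 - \<eta> < (SUP fg\<in>wstar_slice p \<mu> \<alpha> \<times> wstar_slice p \<mu> \<alpha>. lipnorm (\<lambda>x. fst fg x - snd fg x))"
      by (simp only: lip_diam_def)
    then have "\<exists>fg\<in>wstar_slice p \<mu> \<alpha> \<times> wstar_slice p \<mu> \<alpha>. 2 - \<eta> < lipnorm (\<lambda>x. fst fg x - snd fg x)"
      by (rule less_cSUP_iff[OF ne bdd, THEN iffD1])
    then obtain fg where fgin: "fg \<in> wstar_slice p \<mu> \<alpha> \<times> wstar_slice p \<mu> \<alpha>"
        and fgbig: "2 - \<eta> < lipnorm (\<lambda>x. fst fg x - snd fg x)" ..
    define f where "f = fst fg"
    define g where "g = snd fg"
    have fgeq: "fg = (f, g)" by (simp add: f_def g_def)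
    have fs: "f \<in> wstar_slice p \<mu> \<alpha>" and gs: "g \<in> wstar_slice p \<mu> \<alpha>"
      using fgin fgeq by auto
    have big: "2 - \<eta> < lipnorm (\<lambda>x. f x - g x)" using fgbig fgeq by simp
    have fB: "f \<in> LipBall p" and gB: "g \<in> LipBall p" using fs gs sliceB by auto
    have "\<exists>u v. dist (f u - g u) (f v - g v) > (2 - \<eta>) * dist u v"
    proof (rule ccontr)
      assume "\<not> ?thesis"
      then have "(2 - \<eta>)-lipschitz_on UNIV (\<lambda>x. f x - g x)"
        unfolding lipschitz_on_def using eta by (simp add: not_less)
      then have "lipnorm (\<lambda>x. f x - g x) \<le> 2 - \<eta>" by (rule lipnorm_le)
      then show False using big by simp
    qed
    then obtain u0 v0 where uv0: "dist (f u0 - g u0) (f v0 - g v0) > (2 - \<eta>) * dist u0 v0" by blast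
    obtain u v where uv: "(f u - g u) - (f v - g v) > (2 - \<eta>) * dist u v"
    proof (cases "(f u0 - g u0) - (f v0 - g v0) \<ge> 0")
      case True then show ?thesis using uv0 that[of u0 v0] by (simp add: dist_real_def)
    next
      case False then show ?thesis using uv0 that[of v0 u0] by (simp add: dist_real_def dist_commute[of v0 u0])
    qed
    have "u \<noteq> v" using uv by auto
    have fuv: "f u - f v > (1 - \<eta>) * dist u v" and guv: "g v - g u > (1 - \<eta>) * dist u v"
    proof -
      have "g u - g v \<le> dist u v" "f u - f v \<le> dist u v" using LipBall_D[OF fB, of u v] LipBall_D[OF gB, of u v] by simp_all
      moreover have "f v - f u \<le> dist u v" "g v - g u \<le> dist u v"
        using LipBall_D[OF fB, of v u] LipBall_D[OF gB, of v u] by (simp_all add: dist_commute)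
      ultimately have "g u - g v \<le> dist u v" "f v - f u \<le> dist u v" "f u - f v \<le> dist u v" "g v - g u \<le> dist u v"
        by simp_all
      note hh = this
      obtain dd where dd: "dd = dist u v" by blast
      obtain ed where ed: "ed = \<eta> * dd" by blast
      have e1: "(2 - \<eta>) * dist u v = 2 * dd - ed" unfolding dd ed by (simp add: left_diff_distrib)
      have e2: "(1 - \<eta>) * dist u v = dd - ed" unfolding dd ed by (simp add: left_diff_distrib)
      have hh': "g u - g v \<le> dd" "g v - g u \<le> dd" "f u - f v \<le> dd" "f v - f u \<le> dd" using hh dd by simp_all
      have uv': "(f u - g u) - (f v - g v) > 2 * dd - ed" using uv e1 by simp
      have r1: "f u - f v > (1 - \<eta>) * dist u v" unfolding e2 using hh' uv' by linarith
      have r2: "g v - g u > (1 - \<eta>) * dist u v" unfolding e2 using hh' uv' by linarith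
      show "f u - f v > (1 - \<eta>) * dist u v" by (rule r1)
      show "g v - g u > (1 - \<eta>) * dist u v" by (rule r2)
    qed
    have molf: "mol h x y \<ge> 1 - \<epsilon>" if hs: "h \<in> wstar_slice p \<mu> \<alpha>" and xy: "(x,y) \<in> A" for h x y
    proof -
      have hB: "h \<in> LipBall p" using hs sliceB by auto
      have "\<mu> h > 1 - \<alpha>" using hs by (simp add: wstar_slice_def)
      then have "(\<Sum>q\<in>A. mol h (fst q) (snd q)) / n > 1 - \<epsilon> / n" by (simp add: \<mu>_def \<alpha>_def)
      then have "(\<Sum>q\<in>A. mol h (fst q) (snd q)) / n * n > (1 - \<epsilon> / n) * n"
        using npos by (rule mult_strict_right_mono)
      moreover have "(1 - \<epsilon> / n) * n = n - \<epsilon>" using npos by (simp add: left_diff_distrib)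
      moreover have "(\<Sum>q\<in>A. mol h (fst q) (snd q)) / n * n = (\<Sum>q\<in>A. mol h (fst q) (snd q))"
        using npos by simp
      ultimately have s: "(\<Sum>q\<in>A. mol h (fst q) (snd q)) > n - \<epsilon>" by simp
      have "(\<Sum>q\<in>A. mol h (fst q) (snd q)) = mol h x y + (\<Sum>q\<in>A - {(x,y)}. mol h (fst q) (snd q))"
        using xy fA by (simp add: sum.remove)
      also have "(\<Sum>q\<in>A - {(x,y)}. mol h (fst q) (snd q)) \<le> (\<Sum>q\<in>A - {(x,y)}. 1)"
        by (rule sum_mono) (rule mol_le1[OF hB])
      also have "(\<Sum>q\<in>A - {(x,y)}. (1::real)) = n - 1"
      proof -
        have "card A \<ge> 1" using xy fA card_gt_0_iff by (metis Suc_le_eq One_nat_def empty_iff)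
        then show ?thesis using xy fA by (simp add: n_def of_nat_diff)
      qed
      finally show ?thesis using s by simp
    qed
    have c1: "v \<noteq> u" using \<open>u \<noteq> v\<close> by simp
      have c2: "\<forall>(x, y)\<in>A. 1 - \<epsilon> \<le> mol f x y \<and> 1 - \<epsilon> \<le> mol g x y"
        using molf[OF fs] molf[OF gs] by auto
      have c3: "\<forall>x\<in>piA A. \<forall>y\<in>piA A. max (f x - f y) (g y - g x) + (1 - \<epsilon>) * dist v u \<le> dist x v + dist y u"
      proof (intro ballI)
        fix x y
        have "(1 - \<epsilon>) * dist v u \<le> (1 - \<eta>) * dist u v"
          using eta by (simp add: dist_commute[of v u] mult_right_mono)
        moreover have "f x - f v \<le> dist x v" "f u - f y \<le> dist y u"
          using LipBall_D[OF fB, of x v] LipBall_D[OF fB, of u y] by (simp_all add: dist_commute[of u y])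
        moreover have "g y - g u \<le> dist y u" "g v - g x \<le> dist x v"
          using LipBall_D[OF gB, of y u] LipBall_D[OF gB, of v x] by (simp_all add: dist_commute[of v x])
        ultimately show "max (f x - f y) (g y - g x) + (1 - \<epsilon>) * dist v u \<le> dist x v + dist y u"
          using fuv guv by (simp add: dist_commute[of v u])
      qed
    show ?thesis
      apply (rule bexI[where x=f])
       apply (rule bexI[where x=g])
        apply (rule exI[where x=v])
        apply (rule exI[where x=u])
        apply (intro conjI c1 c2 c3)
       apply (rule gB)
      apply (rule fB)
      done
  qed
qed



lemma exists_max:
  fixes S' :: "'a::metric_space set" and a :: "'a \<Rightarrow> real"
  assumes fin: "finite S'" and pS: "p \<in> S'" and SS: "S \<subseteq> S'"
  shows "\<exists>h0. h0 p = 0 \<and> (\<forall>x\<in>S'. \<forall>y\<in>S'. h0 x - h0 y \<le> dist x y) \<and>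
     (\<forall>h. h p = 0 \<and> (\<forall>x\<in>S'. \<forall>y\<in>S'. h x - h y \<le> dist x y) \<longrightarrow>
        (\<Sum>x\<in>S. a x * h x) \<le> (\<Sum>x\<in>S. a x * h0 x))"
proof -
  define X where "X = product_topology (\<lambda>_. euclideanreal) S'"
  define C where "C = PiE S' (\<lambda>x. {-dist x p..dist x p})"
  define D0 where "D0 = {h \<in> topspace X. h p \<in> {0}}"
  define Dxy where "Dxy = (\<lambda>(x,y). {h \<in> topspace X. h x - h y \<in> {..dist x y}})"
  define D where "D = D0 \<inter> \<Inter>(Dxy ` (S' \<times> S'))"
  define \<Phi> where "\<Phi> h = (\<Sum>x\<in>S. a x * h x)" for h :: "'a \<Rightarrow> real"
  have top: "topspace X = PiE S' (\<lambda>_. UNIV)" by (simp add: X_def)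
  have cC: "compactin X C" unfolding X_def C_def by (simp add: compactin_PiE)
  have proj: "continuous_map X euclideanreal (\<lambda>h. h x)" if "x \<in> S'" for x
    unfolding X_def using continuous_map_product_projection[OF that, of "\<lambda>_. euclideanreal"] by simp
  have cD0: "closedin X D0"
    unfolding D0_def by (rule closedin_continuous_map_preimage[OF proj[OF pS]]) simp
  have cDxy: "closedin X (Dxy (x,y))" if "x \<in> S'" "y \<in> S'" for x y
    unfolding Dxy_def case_prod_conv
  proof (rule closedin_continuous_map_preimage)
    show "continuous_map X euclideanreal (\<lambda>h. h x - h y)"
      by (rule continuous_map_diff[OF proj[OF that(1)] proj[OF that(2)]])
    show "closedin euclideanreal {..dist x y}" using closed_closedin closed_atMost by blast
  qed
  have cD: "closedin X D"
    unfolding D_def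
    by (rule closedin_Int[OF cD0], rule closedin_Inter) (use pS cDxy in auto)
  have cK: "compactin X (D \<inter> C)" by (rule closed_Int_compactin[OF cD cC])
  have cPhi: "continuous_map X euclideanreal \<Phi>"
    unfolding \<Phi>_def
    by (intro continuous_map_sum continuous_map_real_mult continuous_map_const[THEN iffD2])
       (use SS proj fin finite_subset in auto)
  have "compactin euclideanreal (\<Phi> ` (D \<inter> C))" by (rule image_compactin[OF cK cPhi])
  then have comp: "compact (\<Phi> ` (D \<inter> C))" by simp
  have memK: "restrict h S' \<in> D \<inter> C" if "h p = 0" "\<forall>x\<in>S'. \<forall>y\<in>S'. h x - h y \<le> dist x y" for h
  proof -
    have "restrict h S' \<in> C"
    proof -
      have "h x \<in> {-dist x p..dist x p}" if "x \<in> S'" for x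
        using \<open>h p = 0\<close> \<open>\<forall>x\<in>S'. \<forall>y\<in>S'. h x - h y \<le> dist x y\<close> that pS
        by (auto simp: dist_commute) (metis diff_0_right dist_commute minus_le_iff diff_0)+
      then show ?thesis by (auto simp: C_def)
    qed
    moreover have "restrict h S' \<in> D"
      using that pS by (auto simp: D_def D0_def Dxy_def top)
    ultimately show ?thesis by blast
  qed
  have "(\<lambda>_. 0::real) p = 0" "\<forall>x\<in>S'. \<forall>y\<in>S'. (\<lambda>_. 0::real) x - (\<lambda>_. 0) y \<le> dist x y" by auto
  from memK[OF this] have ne: "\<Phi> ` (D \<inter> C) \<noteq> {}" by blast
  obtain s where s: "s \<in> \<Phi> ` (D \<inter> C)" "\<forall>t\<in>\<Phi> ` (D \<inter> C). t \<le> s"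
    using compact_attains_sup[OF comp ne] by blast
  then obtain h0 where h0: "h0 \<in> D \<inter> C" "s = \<Phi> h0" by auto
  have h0K: "h0 p = 0" "\<forall>x\<in>S'. \<forall>y\<in>S'. h0 x - h0 y \<le> dist x y"
    using h0(1) by (auto simp: D_def D0_def Dxy_def)
  have phires: "\<Phi> (restrict h S') = \<Phi> h" for h
    unfolding \<Phi>_def by (rule sum.cong) (use SS in auto)
  show ?thesis
  proof (intro exI[of _ h0] conjI allI impI)
    fix h assume "h p = 0 \<and> (\<forall>x\<in>S'. \<forall>y\<in>S'. h x - h y \<le> dist x y)"
    then have "restrict h S' \<in> D \<inter> C" using memK by blast
    then have "\<Phi> (restrict h S') \<le> s" using s by blast
    then show "(\<Sum>x\<in>S. a x * h x) \<le> (\<Sum>x\<in>S. a x * h0 x)" using phires h0 by (simp add: \<Phi>_def)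
  qed (use h0K in auto)
qed



lemma perturb:
  fixes S' S :: "'a::metric_space set" and a :: "'a \<Rightarrow> real"
  assumes fin: "finite S'"
   and h0p: "h0 p = 0" and h0L: "\<forall>x\<in>S'. \<forall>y\<in>S'. h0 x - h0 y \<le> dist x y"
   and mx: "\<forall>h. h p = 0 \<and> (\<forall>x\<in>S'. \<forall>y\<in>S'. h x - h y \<le> dist x y) \<longrightarrow>
        (\<Sum>x\<in>S. a x * h x) \<le> (\<Sum>x\<in>S. a x * h0 x)"
   and gp: "g p = 0" and gL: "\<forall>x\<in>S'. \<forall>y\<in>S'. g x - g y \<le> dist x y"
   and tight: "\<forall>x\<in>S'. \<forall>y\<in>S'. x \<noteq> y \<and> h0 x - h0 y = dist x y \<longrightarrow> g x - g y \<ge> (1-\<epsilon>) * dist x y"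
   and ep: "\<epsilon> \<ge> 0"
  shows "(\<Sum>x\<in>S. a x * g x) \<ge> (1-\<epsilon>) * (\<Sum>x\<in>S. a x * h0 x)"
proof -
  define P where "P t q = ((h0 (fst q) - h0 (snd q)) + t * ((h0 (fst q) - h0 (snd q)) - (g (fst q) - g (snd q)))
      \<le> (1 + t * \<epsilon>) * dist (fst q) (snd q))" for t :: real and q :: "'a \<times> 'a"
  have ev: "eventually (\<lambda>t. P t q) (at_right 0)" if q: "q \<in> S' \<times> S'" for q
  proof -
    obtain x y where q': "q = (x,y)" "x \<in> S'" "y \<in> S'" using q by auto
    have d0: "dist x y \<ge> 0" by simp
    show ?thesis
    proof (cases "x = y")
      case True then show ?thesis by (simp add: P_def q')
    next
      case xy: False
      show ?thesis
      proof (cases "h0 x - h0 y = dist x y")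
        case True
        have "g x - g y \<ge> (1-\<epsilon>) * dist x y" using tight q' xy True by blast
        then have "P t q" if "t > 0" for t
        proof -
          have "t * ((h0 x - h0 y) - (g x - g y)) \<le> t * (\<epsilon> * dist x y)"
            using that True \<open>g x - g y \<ge> (1-\<epsilon>) * dist x y\<close> by (intro mult_left_mono) (auto simp: algebra_simps)
          then show ?thesis using True by (simp add: P_def q' algebra_simps)
        qed
        then show ?thesis unfolding eventually_at_right_field by (intro exI[of _ 1]) auto
      next
        case False
        define \<delta> where "\<delta> = dist x y - (h0 x - h0 y)"
        have dpos: "\<delta> > 0" using False h0L q' by (force simp: \<delta>_def)
        have dxy: "dist x y > 0" using xy by simp
        have gyx: "g y - g x \<le> dist x y" using gL q' by (metis dist_commute)
        have "P t q" if "t > 0" "t < \<delta> / (2 * dist x y)" for t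
        proof -
          have "t * ((h0 x - h0 y) - (g x - g y)) \<le> t * (2 * dist x y)"
          proof (rule mult_left_mono)
            have "h0 x - h0 y \<le> dist x y" using h0L q' by blast
            then show "h0 x - h0 y - (g x - g y) \<le> 2 * dist x y" using gyx by linarith
          qed (use that in simp)
          also have "\<dots> \<le> \<delta>" using that dxy by (simp add: field_simps)
          finally have "(h0 x - h0 y) + t * ((h0 x - h0 y) - (g x - g y)) \<le> dist x y"
            by (simp add: \<delta>_def)
          also have "dist x y \<le> (1 + t * \<epsilon>) * dist x y"
            using that ep d0 by (simp add: algebra_simps)
          finally show ?thesis by (simp add: P_def q')
        qed
        then show ?thesis unfolding eventually_at_right_field
          by (intro exI[of _ "\<delta> / (2 * dist x y)"]) (use dpos dxy in auto)
      qed
    qed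
  qed
  have "eventually (\<lambda>t. \<forall>q\<in>S' \<times> S'. P t q) (at_right 0)"
    by (rule eventually_ball_finite) (use fin ev in auto)
  then obtain b where b: "b > 0" "\<forall>t>0. t < b \<longrightarrow> (\<forall>q\<in>S' \<times> S'. P t q)"
    unfolding eventually_at_right_field by auto
  define t where "t = b / 2"
  have t: "t > 0" "\<forall>q\<in>S' \<times> S'. P t q" using b by (auto simp: t_def)
  have den: "1 + t * \<epsilon> > 0" using t ep by (smt (verit) mult_nonneg_nonneg)
  define h where "h z = (h0 z + t * (h0 z - g z)) / (1 + t * \<epsilon>)" for z
  have hp: "h p = 0" using h0p gp by (simp add: h_def)
  have hL: "\<forall>x\<in>S'. \<forall>y\<in>S'. h x - h y \<le> dist x y"
  proof (intro ballI)
    fix x y assume "x \<in> S'" "y \<in> S'"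
    then have "P t (x,y)" using t by auto
    then have "(h0 x + t * (h0 x - g x)) - (h0 y + t * (h0 y - g y)) \<le> (1 + t * \<epsilon>) * dist x y"
      by (simp add: P_def algebra_simps)
    then show "h x - h y \<le> dist x y"
      using den by (simp add: h_def diff_divide_distrib[symmetric] divide_le_eq mult.commute)
  qed
  have "(\<Sum>x\<in>S. a x * h x) \<le> (\<Sum>x\<in>S. a x * h0 x)" using mx hp hL by blast
  moreover have "(\<Sum>x\<in>S. a x * h x) = ((\<Sum>x\<in>S. a x * h0 x) + t * ((\<Sum>x\<in>S. a x * h0 x) - (\<Sum>x\<in>S. a x * g x))) / (1 + t * \<epsilon>)"
  proof -
    have "(\<Sum>x\<in>S. a x * h x) = (\<Sum>x\<in>S. (a x * h0 x + t * (a x * h0 x - a x * g x)) / (1 + t * \<epsilon>))"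
      by (rule sum.cong) (auto simp: h_def algebra_simps)
    also have "\<dots> = (\<Sum>x\<in>S. a x * h0 x + t * (a x * h0 x - a x * g x)) / (1 + t * \<epsilon>)"
      by (rule sum_divide_distrib[symmetric])
    also have "(\<Sum>x\<in>S. a x * h0 x + t * (a x * h0 x - a x * g x))
       = (\<Sum>x\<in>S. a x * h0 x) + t * ((\<Sum>x\<in>S. a x * h0 x) - (\<Sum>x\<in>S. a x * g x))"
      by (simp add: sum.distrib sum_distrib_left[symmetric] sum_subtractf)
    finally show ?thesis .
  qed
  ultimately have "(\<Sum>x\<in>S. a x * h0 x) + t * ((\<Sum>x\<in>S. a x * h0 x) - (\<Sum>x\<in>S. a x * g x))
      \<le> (1 + t * \<epsilon>) * (\<Sum>x\<in>S. a x * h0 x)"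
    using den by (simp add: divide_le_eq mult.commute)
  then have "t * ((\<Sum>x\<in>S. a x * h0 x) - (\<Sum>x\<in>S. a x * g x)) \<le> t * (\<epsilon> * (\<Sum>x\<in>S. a x * h0 x))"
    by (simp add: algebra_simps)
  then have "(\<Sum>x\<in>S. a x * h0 x) - (\<Sum>x\<in>S. a x * g x) \<le> \<epsilon> * (\<Sum>x\<in>S. a x * h0 x)"
    using t(1) by simp
  then show ?thesis by (simp add: algebra_simps)
qed



lemma sum_rot: "(\<Sum>i<n. f ((i + 1) mod n)) = (\<Sum>i<(n::nat). (f i :: real))"
proof (cases n)
  case 0 then show ?thesis by simp
next
  case (Suc m)
  have "(\<Sum>i<Suc m. f ((i + 1) mod Suc m)) = (\<Sum>i<m. f ((i + 1) mod Suc m)) + f 0"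
    by (simp add: sum.lessThan_Suc)
  also have "(\<Sum>i<m. f ((i + 1) mod Suc m)) = (\<Sum>i<m. f (Suc i))"
    by (rule sum.cong) auto
  finally have l: "(\<Sum>i<Suc m. f ((i + 1) mod Suc m)) = (\<Sum>i<m. f (Suc i)) + f 0" .
  have r: "(\<Sum>i<Suc m. f i) = f 0 + (\<Sum>i<m. f (Suc i))" by (rule sum.lessThan_Suc_shift)
  show ?thesis unfolding Suc using l r by linarith
qed

lemma tight_cyc:
  fixes h :: "'a::metric_space \<Rightarrow> real"
  assumes L: "\<forall>x\<in>S'. \<forall>y\<in>S'. h x - h y \<le> dist x y"
  shows "cyc_monotonic {(x,y). x \<in> S' \<and> y \<in> S' \<and> x \<noteq> y \<and> h x - h y = dist x y}"
  unfolding cyc_monotonic_def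
proof (intro allI impI)
  fix ps assume ps: "set ps \<subseteq> {(x,y). x \<in> S' \<and> y \<in> S' \<and> x \<noteq> y \<and> h x - h y = dist x y}"
  define n where "n = length ps"
  have mem: "fst (ps!i) \<in> S' \<and> snd (ps!i) \<in> S' \<and> h (fst (ps!i)) - h (snd (ps!i)) = dist (fst (ps!i)) (snd (ps!i))"
    if "i < n" for i
  proof -
    have "ps ! i \<in> set ps" using that by (simp add: n_def)
    then have pin: "ps ! i \<in> {(x,y). x \<in> S' \<and> y \<in> S' \<and> x \<noteq> y \<and> h x - h y = dist x y}" by (rule subsetD[OF ps])
    obtain x y where xy: "ps ! i = (x, y)" by (cases "ps ! i")
    show ?thesis using pin unfolding xy by simp
  qed
  have e0: "(\<Sum>i<n. dist (fst (ps ! i)) (snd (ps ! i))) = (\<Sum>i<n. h (fst (ps ! i)) - h (snd (ps ! i)))"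
    by (rule sum.cong) (use mem in auto)
  have e1: "(\<Sum>i<n. h (fst (ps ! i)) - h (snd (ps ! i))) = (\<Sum>i<n. h (fst (ps ! i))) - (\<Sum>i<n. h (snd (ps ! i)))"
    by (rule sum_subtractf)
  have e2: "(\<Sum>i<n. h (snd (ps ! ((i + 1) mod n)))) = (\<Sum>i<n. h (snd (ps ! i)))"
    by (rule sum_rot)
  have e3: "(\<Sum>i<n. h (fst (ps ! i)) - h (snd (ps ! ((i + 1) mod n))))
      = (\<Sum>i<n. h (fst (ps ! i))) - (\<Sum>i<n. h (snd (ps ! ((i + 1) mod n))))" by (rule sum_subtractf)
  have e4: "(\<Sum>i<n. h (fst (ps ! i)) - h (snd (ps ! ((i + 1) mod n)))) \<le> (\<Sum>i<n. dist (fst (ps ! i)) (snd (ps ! ((i + 1) mod n))))"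
  proof (rule sum_mono)
    fix i assume "i \<in> {..<n}"
    then have i1: "i < n" and i2: "(i + 1) mod n < n" by auto
    have "fst (ps ! i) \<in> S'" using mem[OF i1] by blast
    moreover have "snd (ps ! ((i + 1) mod n)) \<in> S'" using mem[OF i2] by blast
    ultimately show "h (fst (ps ! i)) - h (snd (ps ! ((i + 1) mod n))) \<le> dist (fst (ps ! i)) (snd (ps ! ((i + 1) mod n)))"
      using L by blast
  qed
  have "(\<Sum>i<n. dist (fst (ps ! i)) (snd (ps ! i))) \<le> (\<Sum>i<n. dist (fst (ps ! i)) (snd (ps ! ((i + 1) mod n))))"
    using e0 e1 e2 e3 e4 by linarith
  then show "(\<Sum>i<length ps. dist (fst (ps ! i)) (snd (ps ! ((i + 1) mod length ps))))
        \<ge> (\<Sum>i<length ps. dist (fst (ps ! i)) (snd (ps ! i)))" by (simp only: n_def)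
qed

lemma ext_construct:
  fixes f :: "'a::metric_space \<Rightarrow> real"
  assumes fP: "finite P" and neP: "P \<noteq> {}" and fL: "\<forall>x y. f x - f y \<le> dist x y"
    and cond: "\<forall>x\<in>P. \<forall>y\<in>P. c \<le> f x - f y + dist x b + dist y a"
  shows "\<exists>F. (\<forall>x y. F x - F y \<le> dist x y) \<and> (\<forall>x\<in>P. F x = f x) \<and> F b - F a \<ge> min c (dist a b)"
proof -
  define up where "up z = Min ((\<lambda>x. f x + dist x z) ` P)" for z
  define lo where "lo z = Max ((\<lambda>y. f y - dist y z) ` P)" for z
  have up_le: "up z \<le> f x + dist x z" if "x \<in> P" for x z
    unfolding up_def using fP that by (intro Min_le) auto
  have up_in: "\<exists>x\<in>P. up z = f x + dist x z" for z
  proof -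
    have "up z \<in> (\<lambda>x. f x + dist x z) ` P" unfolding up_def using fP neP by (intro Min_in) auto
    then show ?thesis by auto
  qed
  have lo_ge: "lo z \<ge> f y - dist y z" if "y \<in> P" for y z
    unfolding lo_def using fP that by (intro Max_ge) auto
  have lo_in: "\<exists>y\<in>P. lo z = f y - dist y z" for z
  proof -
    have "lo z \<in> (\<lambda>y. f y - dist y z) ` P" unfolding lo_def using fP neP by (intro Max_in) auto
    then show ?thesis by auto
  qed
  have up_lip: "up z - up z' \<le> dist z z'" for z z'
  proof -
    obtain x where x: "x \<in> P" "up z' = f x + dist x z'" using up_in by blast
    have "up z \<le> f x + dist x z" by (rule up_le[OF x(1)])
    moreover have "dist x z \<le> dist x z' + dist z z'" using dist_triangle[of x z z'] by (simp add: dist_commute)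
    ultimately show ?thesis using x by linarith
  qed
  have lo_lip: "lo z - lo z' \<le> dist z z'" for z z'
  proof -
    obtain y where y: "y \<in> P" "lo z = f y - dist y z" using lo_in by blast
    have "lo z' \<ge> f y - dist y z'" by (rule lo_ge[OF y(1)])
    moreover have "dist y z' \<le> dist y z + dist z z'" by (rule dist_triangle)
    ultimately show ?thesis using y by linarith
  qed
  have lo_up: "lo z \<le> up z" for z
  proof -
    obtain y where y: "y \<in> P" "lo z = f y - dist y z" using lo_in by blast
    obtain x where x: "x \<in> P" "up z = f x + dist x z" using up_in by blast
    have "f y - f x \<le> dist y x" using fL by blast
    moreover have "dist y x \<le> dist y z + dist x z" using dist_triangle[of y x z] by (simp add: dist_commute)
    ultimately show ?thesis using x y by linarith
  qed
  have upP: "up x = f x" if "x \<in> P" for x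
  proof -
    obtain x' where x': "x' \<in> P" "up x = f x' + dist x' x" using up_in by blast
    have "f x - f x' \<le> dist x x'" using fL by blast
    then show ?thesis using up_le[OF that, of x] x' by (simp add: dist_commute)
  qed
  have loP: "lo x = f x" if "x \<in> P" for x
  proof -
    obtain y where y: "y \<in> P" "lo x = f y - dist y x" using lo_in by blast
    have "f y - f x \<le> dist y x" using fL by blast
    then show ?thesis using lo_ge[OF that, of x] y by simp
  qed
  define G where "G z = min (up z) (lo a + dist a z)" for z
  define F where "F z = max (lo z) (G z)" for z
  have G_lip: "G z - G z' \<le> dist z z'" for z z'
  proof -
    have "dist a z - dist a z' \<le> dist z z'" using dist_triangle[of a z z'] by (simp add: dist_commute)
    then show ?thesis using up_lip[of z z'] unfolding G_def by linarith
  qed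
  have F_lip: "F z - F z' \<le> dist z z'" for z z'
    using G_lip[of z z'] lo_lip[of z z'] unfolding F_def by linarith
  have FP: "F x = f x" if "x \<in> P" for x
  proof -
    have "lo a \<ge> f x - dist x a" by (rule lo_ge[OF that])
    then have "lo a + dist a x \<ge> f x" by (simp add: dist_commute)
    then have "G x = f x" using upP[OF that] by (simp add: G_def)
    then show ?thesis using loP[OF that] by (simp add: F_def)
  qed
  have Fa: "F a = lo a" using lo_up[of a] by (simp add: F_def G_def)
  have Fb: "F b \<ge> min (up b) (lo a + dist a b)" by (simp add: F_def G_def)
  have "up b - lo a \<ge> c"
  proof -
    obtain y where y: "y \<in> P" "lo a = f y - dist y a" using lo_in by blast
    obtain x where x: "x \<in> P" "up b = f x + dist x b" using up_in by blast
    have "c \<le> f x - f y + dist x b + dist y a" using cond x(1) y(1) by blast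
    then show ?thesis using x y by linarith
  qed
  then have "F b - F a \<ge> min c (dist a b)" using Fa Fb by linarith
  then show ?thesis using F_lip FP by blast
qed



lemma Phi_bound:
  assumes "f \<in> LipBall p"
  shows "\<bar>\<Sum>x\<in>S. a x * f x\<bar> \<le> (\<Sum>x\<in>S. \<bar>a x\<bar> * dist x p)"
proof -
  have "\<bar>\<Sum>x\<in>S. a x * f x\<bar> \<le> (\<Sum>x\<in>S. \<bar>a x * f x\<bar>)" by (rule sum_abs)
  also have "\<dots> \<le> (\<Sum>x\<in>S. \<bar>a x\<bar> * dist x p)"
  proof (rule sum_mono)
    fix x
    have "f x - f p \<le> dist x p" "f p - f x \<le> dist x p"
      using LipBall_D[OF assms] by (metis dist_commute)+
    then have "\<bar>f x\<bar> \<le> dist x p" using LipBall_lip1(2)[OF assms] by simp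
    then show "\<bar>a x * f x\<bar> \<le> \<bar>a x\<bar> * dist x p" by (simp add: abs_mult mult_left_mono)
  qed
  finally show ?thesis .
qed

lemma main_step:
  fixes p :: "'a::metric_space"
  assumes LTP: "two_Lip_LTP p" and fe: "free_elem p \<mu>" and dn: "dual_norm p \<mu> = 1"
    and al: "\<alpha> > 0" and dl: "\<delta> > 0"
  shows "\<exists>f1\<in>wstar_slice p \<mu> \<alpha>. \<exists>f2\<in>wstar_slice p \<mu> \<alpha>. lipnorm (\<lambda>x. f1 x - f2 x) \<ge> 2 - \<delta>"
proof -
  define e where "e = min (min \<alpha> 1) \<delta> / 4"
  have e: "e > 0" "4 * e \<le> \<alpha>" "4 * e \<le> 1" "4 * e \<le> \<delta>" using al dl by (auto simp: e_def)
  have "\<exists>S a. finite S \<and> (\<forall>f\<in>LipBall p. \<bar>\<mu> f - (\<Sum>x\<in>S. a x * f x)\<bar> \<le> e)"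
    using fe[unfolded free_elem_def, THEN spec[of _ e]] e(1) by (rule mp)
  then obtain S a where fS: "finite S" and app: "\<forall>f\<in>LipBall p. \<bar>\<mu> f - (\<Sum>x\<in>S. a x * f x)\<bar> \<le> e"
    by (elim exE conjE)
  define \<Phi> where "\<Phi> h = (\<Sum>x\<in>S. a x * h x)" for h :: "'a \<Rightarrow> real"
  define B where "B = (\<Sum>x\<in>S. \<bar>a x\<bar> * dist x p)"
  have bddmu: "bdd_above ((\<lambda>f. \<bar>\<mu> f\<bar>) ` LipBall p)"
  proof (rule bdd_aboveI2)
    fix f assume fB: "f \<in> LipBall p"
    have "\<bar>\<Phi> f\<bar> \<le> B" unfolding \<Phi>_def B_def by (rule Phi_bound[OF fB])
    then show "\<bar>\<mu> f\<bar> \<le> B + e" using app fB unfolding \<Phi>_def by force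
  qed
  have sup: "1 - e < (SUP f\<in>LipBall p. \<bar>\<mu> f\<bar>)" using dn e by (simp add: dual_norm_def)
  have LBne: "LipBall p \<noteq> {}" using zero_LipBall by blast
  have "\<exists>f\<in>LipBall p. 1 - e < \<bar>\<mu> f\<bar>"
    by (rule iffD1[OF less_cSUP_iff[OF LBne bddmu] sup])
  then obtain f0 where f0B: "f0 \<in> LipBall p" and f0big: "1 - e < \<bar>\<mu> f0\<bar>" by blast
  have "\<bar>\<mu> f0 - \<Phi> f0\<bar> \<le> e" using app f0B by (simp add: \<Phi>_def)
  then have absphi: "\<bar>\<Phi> f0\<bar> > 1 - 2 * e" using f0big by linarith
  define fs where "fs = (if \<Phi> f0 \<ge> 0 then f0 else (\<lambda>x. - f0 x))"
  have fsB: "fs \<in> LipBall p" using f0B neg_LipBall[OF f0B] by (simp add: fs_def)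
  have phineg: "\<Phi> (\<lambda>x. - f0 x) = - \<Phi> f0" by (simp add: \<Phi>_def sum_negf[symmetric])
  have fsbig: "\<Phi> fs > 1 - 2 * e" using absphi phineg by (auto simp: fs_def)
  define S' where "S' = insert p S"
  have fS': "finite S'" "p \<in> S'" "S \<subseteq> S'" using fS by (auto simp: S'_def)
  obtain h0 where h0p: "h0 p = 0" and h0L: "\<forall>x\<in>S'. \<forall>y\<in>S'. h0 x - h0 y \<le> dist x y"
    and mx': "\<forall>h. h p = 0 \<and> (\<forall>x\<in>S'. \<forall>y\<in>S'. h x - h y \<le> dist x y) \<longrightarrow>
        (\<Sum>x\<in>S. a x * h x) \<le> (\<Sum>x\<in>S. a x * h0 x)"
    using exists_max[OF fS', of a] by (elim exE conjE)
  define N where "N = \<Phi> h0"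
  have fsK: "fs p = 0 \<and> (\<forall>x\<in>S'. \<forall>y\<in>S'. fs x - fs y \<le> dist x y)"
    using LipBall_lip1(2)[OF fsB] LipBall_D[OF fsB] by simp
  have "\<Phi> fs \<le> N" unfolding N_def \<Phi>_def by (rule mx'[rule_format, OF fsK])
  then have Nbig: "N > 1 - 2 * e" using fsbig by linarith
  define A where "A = {(x,y). x \<in> S' \<and> y \<in> S' \<and> x \<noteq> y \<and> h0 x - h0 y = dist x y}"
  have fA: "finite A"
    by (rule finite_subset[of _ "S' \<times> S'"]) (use fS' in \<open>auto simp: A_def\<close>)
  have Aneq: "A \<subseteq> {(x, y). x \<noteq> y}" by (auto simp: A_def)
  have cA: "cyc_monotonic A" unfolding A_def by (rule tight_cyc[OF h0L])
  have pert: "\<Phi> g \<ge> (1 - e) * N"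
    if gp: "g p = 0" and gL: "\<forall>x\<in>S'. \<forall>y\<in>S'. g x - g y \<le> dist x y"
      and gA: "\<forall>(x,y)\<in>A. g x - g y \<ge> (1 - e) * dist x y" for g
  proof -
    have "\<forall>x\<in>S'. \<forall>y\<in>S'. x \<noteq> y \<and> h0 x - h0 y = dist x y \<longrightarrow> g x - g y \<ge> (1-e) * dist x y"
      using gA by (auto simp: A_def)
    then have "(\<Sum>x\<in>S. a x * g x) \<ge> (1-e) * (\<Sum>x\<in>S. a x * h0 x)"
      using perturb[OF fS'(1) h0p h0L mx' gp gL] e(1) by simp
    then show ?thesis by (simp add: \<Phi>_def N_def)
  qed
  have Ane: "A \<noteq> {}"
  proof
    assume "A = {}"
    then have "\<Phi> (\<lambda>_. 0) \<ge> (1 - e) * N" by (intro pert) auto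
    moreover have "(1 - e) * N > 0" using Nbig e by (intro mult_pos_pos) auto
    ultimately show False by (simp add: \<Phi>_def)
  qed
  have l: "finite A \<and> A \<subseteq> {(x, y). x \<noteq> y} \<and> cyc_monotonic A \<and> e > 0" using fA Aneq cA e(1) by simp
  obtain f' g' u v where f'B: "f' \<in> LipBall p" and g'B: "g' \<in> LipBall p" and uv: "u \<noteq> v"
    and molc: "\<forall>(x, y)\<in>A. mol f' x y \<ge> 1 - e \<and> mol g' x y \<ge> 1 - e"
    and C: "\<forall>x\<in>piA A. \<forall>y\<in>piA A. max (f' x - f' y) (g' y - g' x) + (1 - e) * dist u v \<le> dist x u + dist y v"
    using LTP[unfolded two_Lip_LTP_def, THEN spec[of _ A], THEN spec[of _ e], THEN mp, OF l]
    by (elim bexE exE conjE)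
  define P where "P = piA A"
  have fP: "finite P" using fA by (simp add: P_def piA_def)
  have neP: "P \<noteq> {}" using Ane by (auto simp: P_def piA_def)
  have AP: "x \<in> P" "y \<in> P" if "(x,y) \<in> A" for x y
    using that by (force simp: P_def piA_def)+
  have duv: "dist u v > 0" using uv by simp
  have cle: "(1 - e) * dist u v \<le> dist u v" using e duv by (simp add: mult_le_cancel_right1)
  obtain F1 where F1L: "\<forall>x y. F1 x - F1 y \<le> dist x y" and F1P: "\<forall>x\<in>P. F1 x = f' x"
    and F1uv: "F1 v - F1 u \<ge> min ((1 - e) * dist u v) (dist u v)"
  proof -
    have "\<forall>x\<in>P. \<forall>y\<in>P. (1 - e) * dist u v \<le> f' x - f' y + dist x v + dist y u"
    proof (intro ballI)
      fix x y assume "x \<in> P" "y \<in> P"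
      then have "max (f' y - f' x) (g' x - g' y) + (1 - e) * dist u v \<le> dist y u + dist x v"
        using C by (simp add: P_def)
      then show "(1 - e) * dist u v \<le> f' x - f' y + dist x v + dist y u" by linarith
    qed
    moreover have "\<forall>x y. f' x - f' y \<le> dist x y" using LipBall_D[OF f'B] by blast
    ultimately have "\<exists>F. (\<forall>x y. F x - F y \<le> dist x y) \<and> (\<forall>x\<in>P. F x = f' x) \<and> F v - F u \<ge> min ((1 - e) * dist u v) (dist u v)"
      by (intro ext_construct[OF fP neP])
    then obtain F where "\<forall>x y. F x - F y \<le> dist x y" "\<forall>x\<in>P. F x = f' x" "F v - F u \<ge> min ((1 - e) * dist u v) (dist u v)"
      by (elim exE conjE)
    then show ?thesis by (intro that) (simp_all add: dist_commute)
  qed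
  obtain F2 where F2L: "\<forall>x y. F2 x - F2 y \<le> dist x y" and F2P: "\<forall>x\<in>P. F2 x = g' x"
    and F2uv: "F2 u - F2 v \<ge> min ((1 - e) * dist u v) (dist v u)"
  proof -
    have "\<forall>x\<in>P. \<forall>y\<in>P. (1 - e) * dist u v \<le> g' x - g' y + dist x u + dist y v"
    proof (intro ballI)
      fix x y assume "x \<in> P" "y \<in> P"
      then have "max (f' x - f' y) (g' y - g' x) + (1 - e) * dist u v \<le> dist x u + dist y v"
        using C by (simp add: P_def)
      then show "(1 - e) * dist u v \<le> g' x - g' y + dist x u + dist y v" by linarith
    qed
    moreover have "\<forall>x y. g' x - g' y \<le> dist x y" using LipBall_D[OF g'B] by blast
    ultimately have "\<exists>F. (\<forall>x y. F x - F y \<le> dist x y) \<and> (\<forall>x\<in>P. F x = g' x) \<and> F u - F v \<ge> min ((1 - e) * dist u v) (dist v u)"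
      by (intro ext_construct[OF fP neP])
    then obtain F where "\<forall>x y. F x - F y \<le> dist x y" "\<forall>x\<in>P. F x = g' x" "F u - F v \<ge> min ((1 - e) * dist u v) (dist v u)"
      by (elim exE conjE)
    then show ?thesis by (intro that) (simp_all add: dist_commute)
  qed
  have F1uv': "F1 v - F1 u \<ge> (1 - e) * dist u v" using F1uv cle by simp
  have F2uv': "F2 u - F2 v \<ge> (1 - e) * dist u v" using F2uv cle by (simp add: dist_commute)
  have inslice: "(\<lambda>z. G z - G p) \<in> wstar_slice p \<mu> \<alpha>"
    if GL: "\<forall>x y. G x - G y \<le> dist x y" and GP: "\<forall>x\<in>P. G x = h x" and hB: "h \<in> LipBall p"
      and hm: "\<forall>(x, y)\<in>A. mol h x y \<ge> 1 - e" for G h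
  proof -
    define Gn where "Gn z = G z - G p" for z
    have GnB: "Gn \<in> LipBall p"
      by (rule LipBall_intro, rule lip1_intro) (use GL in \<open>auto simp: Gn_def\<close>)
    have "\<Phi> Gn \<ge> (1 - e) * N"
    proof (rule pert)
      show "Gn p = 0" by (simp add: Gn_def)
      show "\<forall>x\<in>S'. \<forall>y\<in>S'. Gn x - Gn y \<le> dist x y" using GL by (simp add: Gn_def)
      show "\<forall>(x, y)\<in>A. (1 - e) * dist x y \<le> Gn x - Gn y"
      proof (intro ballI, clarify)
        fix x y assume xy: "(x,y) \<in> A"
        then have "x \<noteq> y" by (auto simp: A_def)
        then have dpos: "dist x y > 0" by simp
        have "mol h x y \<ge> 1 - e" using hm xy by auto
        then have "h x - h y \<ge> (1 - e) * dist x y" using dpos by (simp add: mol_def le_divide_eq)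
        moreover have "G x = h x" "G y = h y" using GP AP[OF xy] by auto
        ultimately show "(1 - e) * dist x y \<le> Gn x - Gn y" by (simp add: Gn_def)
      qed
    qed
    moreover have "(1 - e) * N \<ge> (1 - e) * (1 - 2 * e)"
      using Nbig e by (intro mult_left_mono) auto
    moreover have "(1 - e) * (1 - 2 * e) = 1 - 3 * e + 2 * (e * e)" by (simp add: algebra_simps)
    moreover have "e * e > 0" using e by simp
    moreover have "\<bar>\<mu> Gn - \<Phi> Gn\<bar> \<le> e" using app GnB by (simp add: \<Phi>_def)
    ultimately have "\<mu> Gn > 1 - \<alpha>" using e by linarith
    moreover have "Gn = (\<lambda>z. G z - G p)" by (rule ext) (simp add: Gn_def)
    ultimately show ?thesis using GnB by (simp add: wstar_slice_def)
  qed
  have m1: "\<forall>(x, y)\<in>A. mol f' x y \<ge> 1 - e" and m2: "\<forall>(x, y)\<in>A. mol g' x y \<ge> 1 - e"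
    using molc by auto
  have s1: "(\<lambda>z. F1 z - F1 p) \<in> wstar_slice p \<mu> \<alpha>" by (rule inslice[OF F1L F1P f'B m1])
  have s2: "(\<lambda>z. F2 z - F2 p) \<in> wstar_slice p \<mu> \<alpha>" by (rule inslice[OF F2L F2P g'B m2])
  define H where "H x = (F1 x - F1 p) - (F2 x - F2 p)" for x
  have sB: "wstar_slice p \<mu> \<alpha> \<subseteq> LipBall p" by (auto simp: wstar_slice_def)
  have Hl: "2-lipschitz_on UNIV H"
    unfolding H_def by (rule diff_lip2) (use s1 s2 sB in auto)
  have "(H v - H u) / dist v u \<le> lipnorm H" by (rule lipnorm_lower[OF Hl]) (use uv in auto)
  moreover have "H v - H u \<ge> 2 * (1 - e) * dist u v" using F1uv' F2uv' by (simp add: H_def algebra_simps)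
  ultimately have q: "(H v - H u) / dist u v \<le> lipnorm H" "2 * (1 - e) * dist u v \<le> H v - H u"
    by (simp_all add: dist_commute)
  have "2 * (1 - e) \<le> (H v - H u) / dist u v" using q(2) duv by (simp add: le_divide_eq)
  then have "2 * (1 - e) \<le> lipnorm H" using q(1) by linarith
  moreover have "2 * (1 - e) = 2 - 2 * e" by (simp add: algebra_simps)
  ultimately have "lipnorm H \<ge> 2 - \<delta>" using e(4) e(1) by linarith
  then have fin: "lipnorm (\<lambda>x. (\<lambda>z. F1 z - F1 p) x - (\<lambda>z. F2 z - F2 p) x) \<ge> 2 - \<delta>"
    unfolding H_def by simp
  show ?thesis
    apply (rule bexI[where x="\<lambda>z. F1 z - F1 p"])
     apply (rule bexI[where x="\<lambda>z. F2 z - F2 p"])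
    using fin s1 s2 by simp_all
qed

lemma LTP_imp_LD2P:
  fixes p :: "'a::metric_space"
  assumes LTP: "two_Lip_LTP p"
  shows "wstar_LD2P p"
  unfolding wstar_LD2P_def
proof (intro allI impI, elim conjE)
  fix \<mu> :: "('a \<Rightarrow> real) \<Rightarrow> real" and \<alpha> :: real assume fe: "free_elem p \<mu>" and dn: "dual_norm p \<mu> = 1" and al: "\<alpha> > 0"
  define Sl where "Sl = wstar_slice p \<mu> \<alpha>"
  have sB: "Sl \<subseteq> LipBall p" by (auto simp: wstar_slice_def Sl_def)
  have ms: "\<exists>f1\<in>Sl. \<exists>f2\<in>Sl. lipnorm (\<lambda>x. f1 x - f2 x) \<ge> 2 - d" if "d > 0" for d
    using main_step[OF LTP fe dn al that] by (simp add: Sl_def)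
  have "\<exists>f1\<in>Sl. \<exists>f2\<in>Sl. lipnorm (\<lambda>x. f1 x - f2 x) \<ge> 2 - 1" by (rule ms) simp
  then obtain f1 where "f1 \<in> Sl" by (elim bexE)
  then have ne: "Sl \<times> Sl \<noteq> {}" by blast
  have bdd: "bdd_above ((\<lambda>fg. lipnorm (\<lambda>x. fst fg x - snd fg x)) ` (Sl \<times> Sl))"
  proof (rule bdd_aboveI2)
    fix fg assume "fg \<in> Sl \<times> Sl"
    then have "fst fg \<in> LipBall p" "snd fg \<in> LipBall p" using sB by auto
    then show "lipnorm (\<lambda>x. fst fg x - snd fg x) \<le> 2" by (intro lipnorm_le diff_lip2)
  qed
  have le: "lip_diam Sl \<le> 2"
    unfolding lip_diam_def
  proof (rule cSUP_least[OF ne])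
    fix fg assume "fg \<in> Sl \<times> Sl"
    then have "fst fg \<in> LipBall p" "snd fg \<in> LipBall p" using sB by auto
    then show "lipnorm (\<lambda>x. fst fg x - snd fg x) \<le> 2" by (intro lipnorm_le diff_lip2)
  qed
  have ge: "lip_diam Sl \<ge> 2 - d" if dpos: "d > 0" for d
  proof -
    obtain f1 f2 where f: "f1 \<in> Sl" "f2 \<in> Sl" "lipnorm (\<lambda>x. f1 x - f2 x) \<ge> 2 - d" using ms[OF dpos] by blast
    have "2 - d \<le> lipnorm (\<lambda>x. fst (f1, f2) x - snd (f1, f2) x)" using f(3) by simp
    moreover have fx: "(f1, f2) \<in> Sl \<times> Sl" using f by simp
    ultimately show ?thesis unfolding lip_diam_def using cSUP_upper2[OF bdd fx] by blast
  qed
  have "lip_diam Sl \<ge> 2"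
  proof (rule field_le_epsilon)
    fix d :: real assume "d > 0"
    from ge[OF this] show "2 \<le> lip_diam Sl + d" by simp
  qed
  then show "lip_diam (wstar_slice p \<mu> \<alpha>) = 2" using le by (simp add: Sl_def)
qed


theorem proposition4p5:
  fixes p :: "'a::metric_space"
  assumes "\<exists>x y :: 'a. x \<noteq> y"
  shows "wstar_LD2P p \<longleftrightarrow> two_Lip_LTP p"
  using LD2P_imp_LTP[OF assms] LTP_imp_LD2P by blast

end
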